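(* Let $n\geq2$ be an integer, let $\varphi_n:\left(0,\frac{2\pi}{\log n}\right)\to\mathbb{T}\setminus\{1\}$ be $\varphi_n(t)=e^{it\log n}$, and let $A\subseteq\mathbb{T}$ be an $m$-measurable set with $m(A)=1$. Then $\{\kappa_{1+it}\}_{t\in\varphi_n^{-1}(A)}$ spans a dense subspace of $H^2$.
   Context: $\mathbb{T}$ is the unit circle and $m$ the normalized Lebesgue measure on $\mathbb{T}$. $H^2$ denotes the Hardy space of analytic functions $f(z)=\sum_{k\ge0}\hat f(k)z^k$ on the open unit disk with $\sum_{k}|\hat f(k)|^2<\infty$. For $s\in\mathbb{C}\setminus\{0\}$ set $\varphi_0(s)=-\frac1s$ and $\varphi_k(s)=-\frac1s\left((k+1)^{1-s}-k^{1-s}\right)$ for $k\geq1$. For $\Re s>1/2$ the zeta kernel is $\kappa_s(z)=\sum_{k=0}^\infty\varphi_k(\bar s)z^k\in H^2$; equivalently $\langle f,\kappa_s\rangle=\Lambda^{(s)}(f)$ where $\Lambda^{(s)}$ is the bounded linear functional on $H^2$ with $\Lambda^{(s)}(z^k)=\varphi_k(s)$. *)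

theory Defs
  imports "HOL-Analysis.Analysis"
begin

text \<open>H^2 is modelled isometrically by its Taylor coefficient sequences:
  f(z) = sum_k f k z^k with square-summable coefficients.\<close>

definition H2 :: "(nat \<Rightarrow> complex) set" where
  "H2 = {f. summable (\<lambda>k. (cmod (f k))\<^sup>2)}"

definition H2_norm :: "(nat \<Rightarrow> complex) \<Rightarrow> real" where
  "H2_norm f = sqrt (\<Sum>k. (cmod (f k))\<^sup>2)"

definition zeta_phi :: "complex \<Rightarrow> nat \<Rightarrow> complex" where
  "zeta_phi s k = (if k = 0 then - 1 / s
     else - (1 / s) * ((of_nat (k + 1)) powr (1 - s) - (of_nat k) powr (1 - s)))"

definition zeta_kernel :: "complex \<Rightarrow> nat \<Rightarrow> complex" where
  "zeta_kernel s k = zeta_phi (cnj s) k"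

definition kernels_span_dense :: "real set \<Rightarrow> bool" where
  "kernels_span_dense B \<longleftrightarrow>
     (\<forall>f\<in>H2. \<forall>e>0. \<exists>(N::nat) (ts::nat \<Rightarrow> real) (c::nat \<Rightarrow> complex).
        (\<forall>i<N. ts i \<in> B) \<and>
        H2_norm (\<lambda>k. f k - (\<Sum>i<N. c i * zeta_kernel (1 + \<i> * complex_of_real (ts i)) k)) < e)"

text \<open>Normalized Lebesgue measure on the circle, via the parametrization theta -> cis theta
  on [0, 2 pi).\<close>
definition circle_measurable :: "complex set \<Rightarrow> bool" where
  "circle_measurable A \<longleftrightarrow> {\<theta> \<in> {0..<2*pi}. cis \<theta> \<in> A} \<in> sets lebesgue"

definition circle_m :: "complex set \<Rightarrow> real" where
  "circle_m A = measure lebesgue {\<theta> \<in> {0..<2*pi}. cis \<theta> \<in> A} / (2*pi)"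

definition phi_n :: "nat \<Rightarrow> real \<Rightarrow> complex" where
  "phi_n n t = cis (t * ln (real n))"

end

theory Submission
  imports Defs "HOL-Complex_Analysis.Complex_Analysis"
begin


definition nsq :: "(nat \<Rightarrow> complex) \<Rightarrow> real" where
  "nsq f = (\<Sum>k. (cmod (f k))\<^sup>2)"

definition inn :: "(nat \<Rightarrow> complex) \<Rightarrow> (nat \<Rightarrow> complex) \<Rightarrow> complex" where
  "inn f g = (\<Sum>k. f k * cnj (g k))"

lemma sq_add_bound: "(cmod (a + b))\<^sup>2 \<le> 2 * (cmod a)\<^sup>2 + 2 * (cmod b)\<^sup>2"
proof -
  have "cmod (a + b) \<le> cmod a + cmod b" by (rule norm_triangle_ineq)
  then have "(cmod (a + b))\<^sup>2 \<le> (cmod a + cmod b)\<^sup>2"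
    by (simp add: power_mono)
  also have "\<dots> \<le> 2 * (cmod a)\<^sup>2 + 2 * (cmod b)\<^sup>2"
  proof -
    have "0 \<le> (cmod a - cmod b)\<^sup>2" by simp
    then show ?thesis unfolding power2_sum power2_diff by linarith
  qed
  finally show ?thesis .
qed

lemma H2_add: assumes "f \<in> H2" "g \<in> H2" shows "(\<lambda>k. f k + g k) \<in> H2"
  unfolding H2_def mem_Collect_eq
proof (rule summable_comparison_test)
  show "summable (\<lambda>k. 2 * (cmod (f k))\<^sup>2 + 2 * (cmod (g k))\<^sup>2)"
    using assms unfolding H2_def mem_Collect_eq by (intro summable_add summable_mult)
  show "\<exists>N. \<forall>n\<ge>N. norm ((cmod (f n + g n))\<^sup>2) \<le> 2 * (cmod (f n))\<^sup>2 + 2 * (cmod (g n))\<^sup>2"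
    using sq_add_bound by auto
qed

lemma H2_scale: "f \<in> H2 \<Longrightarrow> (\<lambda>k. c * f k) \<in> H2"
  unfolding H2_def by (simp add: norm_mult power_mult_distrib summable_mult)

lemma H2_diff: "f \<in> H2 \<Longrightarrow> g \<in> H2 \<Longrightarrow> (\<lambda>k. f k - g k) \<in> H2"
  using H2_add[of f "\<lambda>k. (-1) * g k"] H2_scale[of g "-1"] by simp

lemma H2_zero: "(\<lambda>k. 0) \<in> H2" by (simp add: H2_def)

lemma H2_sum: assumes "finite I" "\<And>i. i \<in> I \<Longrightarrow> F i \<in> H2" shows "(\<lambda>k. \<Sum>i\<in>I. F i k) \<in> H2"
  using assms by (induction I rule: finite_induct) (auto simp: H2_zero intro!: H2_add)

lemma summable_inn_abs:
  assumes "f \<in> H2" "g \<in> H2"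
  shows "summable (\<lambda>k. cmod (f k * cnj (g k)))"
proof (rule summable_comparison_test)
  show "summable (\<lambda>k. ((cmod (f k))\<^sup>2 + (cmod (g k))\<^sup>2) / 2)"
    using assms by (auto simp: H2_def intro!: summable_divide summable_add)
  show "\<exists>N. \<forall>n\<ge>N. norm (cmod (f n * cnj (g n))) \<le> ((cmod (f n))\<^sup>2 + (cmod (g n))\<^sup>2) / 2"
  proof (intro exI allI impI)
    fix n :: nat
    have "0 \<le> (cmod (f n) - cmod (g n))\<^sup>2" by simp
    then show "norm (cmod (f n * cnj (g n))) \<le> ((cmod (f n))\<^sup>2 + (cmod (g n))\<^sup>2) / 2"
      unfolding power2_diff by (simp add: norm_mult)
  qed
qed

lemma summable_inn: "f \<in> H2 \<Longrightarrow> g \<in> H2 \<Longrightarrow> summable (\<lambda>k. f k * cnj (g k))"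
  by (rule summable_norm_cancel[OF summable_inn_abs])

lemma nsq_summable: "f \<in> H2 \<Longrightarrow> summable (\<lambda>k. (cmod (f k))\<^sup>2)"
  by (simp add: H2_def)

lemma nsq_nonneg: "f \<in> H2 \<Longrightarrow> nsq f \<ge> 0"
  unfolding nsq_def H2_def by (auto intro: suminf_nonneg)

lemma term_expand:
  "(cmod (a - l * b))\<^sup>2 = (cmod a)\<^sup>2 - 2 * Re (cnj l * (a * cnj b)) + (cmod l)\<^sup>2 * (cmod b)\<^sup>2"
  unfolding cmod_power2 by (simp add: algebra_simps power2_eq_square)

lemma nsq_expand:
  assumes "f \<in> H2" "w \<in> H2"
  shows "nsq (\<lambda>k. f k - l * w k) = nsq f - 2 * Re (cnj l * inn f w) + (cmod l)\<^sup>2 * nsq w"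
proof -
  have s1: "summable (\<lambda>k. (cmod (f k))\<^sup>2)" "summable (\<lambda>k. (cmod (w k))\<^sup>2)"
    using assms by (auto simp: H2_def)
  have s2: "summable (\<lambda>k. cnj l * (f k * cnj (w k)))"
    using summable_inn[OF assms] by (rule summable_mult)
  have s3: "summable (\<lambda>k. 2 * Re (cnj l * (f k * cnj (w k))))"
    using summable_Re[OF s2] by (intro summable_mult)
  have "nsq (\<lambda>k. f k - l * w k) = (\<Sum>k. (cmod (f k))\<^sup>2 - 2 * Re (cnj l * (f k * cnj (w k))) + (cmod l)\<^sup>2 * (cmod (w k))\<^sup>2)"
    unfolding nsq_def term_expand ..
  also have "\<dots> = (\<Sum>k. (cmod (f k))\<^sup>2) - (\<Sum>k. 2 * Re (cnj l * (f k * cnj (w k)))) + (\<Sum>k. (cmod l)\<^sup>2 * (cmod (w k))\<^sup>2)"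
    using s1 s3 by (subst suminf_add[symmetric]) (auto intro!: summable_diff summable_mult suminf_diff[symmetric])
  also have "(\<Sum>k. 2 * Re (cnj l * (f k * cnj (w k)))) = 2 * Re (cnj l * inn f w)"
  proof -
    have "(\<lambda>k. f k * cnj (w k)) sums inn f w" unfolding inn_def using summable_inn[OF assms] by (simp add: summable_sums)
    then have "(\<lambda>k. 2 * Re (cnj l * (f k * cnj (w k)))) sums (2 * Re (cnj l * inn f w))"
      by (intro sums_mult sums_Re)
    then show ?thesis by (rule sums_unique[symmetric])
  qed
  also have "(\<Sum>k. (cmod l)\<^sup>2 * (cmod (w k))\<^sup>2) = (cmod l)\<^sup>2 * nsq w"
    unfolding nsq_def using s1 by (simp add: suminf_mult)
  finally show ?thesis by (simp add: nsq_def)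
qed

lemma nsq_scale: "f \<in> H2 \<Longrightarrow> nsq (\<lambda>k. c * f k) = (cmod c)\<^sup>2 * nsq f"
  unfolding nsq_def by (simp add: norm_mult power_mult_distrib suminf_mult H2_def)

lemma parallelogram:
  assumes "f \<in> H2" "g \<in> H2"
  shows "nsq (\<lambda>k. f k - g k) + nsq (\<lambda>k. f k + g k) = 2 * nsq f + 2 * nsq g"
proof -
  have t: "(cmod (a - b))\<^sup>2 + (cmod (a + b))\<^sup>2 = 2 * (cmod a)\<^sup>2 + 2 * (cmod b)\<^sup>2" for a b :: complex
    unfolding cmod_power2 by (simp add: algebra_simps power2_eq_square)
  have s: "summable (\<lambda>k. (cmod (f k - g k))\<^sup>2)" "summable (\<lambda>k. (cmod (f k + g k))\<^sup>2)"
    "summable (\<lambda>k. (cmod (f k))\<^sup>2)" "summable (\<lambda>k. (cmod (g k))\<^sup>2)"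
    using H2_diff[OF assms] H2_add[OF assms] assms by (auto simp: H2_def)
  have a: "(\<lambda>k. (cmod (f k - g k))\<^sup>2 + (cmod (f k + g k))\<^sup>2) sums (nsq (\<lambda>k. f k - g k) + nsq (\<lambda>k. f k + g k))"
    unfolding nsq_def by (intro sums_add summable_sums s)
  have b: "(\<lambda>k. 2 * (cmod (f k))\<^sup>2 + 2 * (cmod (g k))\<^sup>2) sums (2 * nsq f + 2 * nsq g)"
    unfolding nsq_def by (intro sums_add sums_mult summable_sums s)
  show ?thesis using a b unfolding t by (rule sums_unique2)
qed

lemma nsq_triangle:
  assumes "f \<in> H2" "g \<in> H2"
  shows "sqrt (nsq (\<lambda>k. f k + g k)) \<le> sqrt (nsq f) + sqrt (nsq g)"
proof -
  have s: "summable (\<lambda>k. (cmod (f k + g k))\<^sup>2)"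
    "summable (\<lambda>k. (cmod (f k))\<^sup>2)" "summable (\<lambda>k. (cmod (g k))\<^sup>2)"
    using H2_add[OF assms] assms by (auto simp: H2_def)
  have "nsq (\<lambda>k. f k + g k) \<le> (sqrt (nsq f) + sqrt (nsq g))\<^sup>2"
    unfolding nsq_def
  proof (rule suminf_le_const[OF s(1)])
    fix K
    have "L2_set (\<lambda>k. cmod (f k + g k)) {..<K} \<le> L2_set (\<lambda>k. cmod (f k) + cmod (g k)) {..<K}"
      by (rule L2_set_mono) (auto simp: norm_triangle_ineq)
    also have "\<dots> \<le> L2_set (\<lambda>k. cmod (f k)) {..<K} + L2_set (\<lambda>k. cmod (g k)) {..<K}"
      by (rule L2_set_triangle_ineq)
    also have "L2_set (\<lambda>k. cmod (f k)) {..<K} \<le> sqrt (\<Sum>k. (cmod (f k))\<^sup>2)"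
      unfolding L2_set_def using s by (auto intro!: sum_le_suminf)
    also have "L2_set (\<lambda>k. cmod (g k)) {..<K} \<le> sqrt (\<Sum>k. (cmod (g k))\<^sup>2)"
      unfolding L2_set_def using s by (auto intro!: sum_le_suminf)
    finally have "sqrt (\<Sum>k<K. (cmod (f k + g k))\<^sup>2) \<le> sqrt (\<Sum>k. (cmod (f k))\<^sup>2) + sqrt (\<Sum>k. (cmod (g k))\<^sup>2)"
      by (simp add: L2_set_def)
    then have "(sqrt (\<Sum>k<K. (cmod (f k + g k))\<^sup>2))\<^sup>2 \<le> (sqrt (\<Sum>k. (cmod (f k))\<^sup>2) + sqrt (\<Sum>k. (cmod (g k))\<^sup>2))\<^sup>2"
      by (intro power_mono) (auto intro!: sum_nonneg)
    moreover have "(sqrt (\<Sum>k<K. (cmod (f k + g k))\<^sup>2))\<^sup>2 = (\<Sum>k<K. (cmod (f k + g k))\<^sup>2)"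
      by (intro real_sqrt_pow2 sum_nonneg) auto
    ultimately show "(\<Sum>k<K. (cmod (f k + g k))\<^sup>2) \<le> (sqrt (\<Sum>k. (cmod (f k))\<^sup>2) + sqrt (\<Sum>k. (cmod (g k))\<^sup>2))\<^sup>2"
      by simp
  qed
  then have "sqrt (nsq (\<lambda>k. f k + g k)) \<le> sqrt ((sqrt (nsq f) + sqrt (nsq g))\<^sup>2)"
    by (rule real_sqrt_le_mono)
  moreover have "sqrt ((sqrt (nsq f) + sqrt (nsq g))\<^sup>2) = sqrt (nsq f) + sqrt (nsq g)"
    by (rule real_sqrt_unique) (auto intro!: add_nonneg_nonneg nsq_nonneg assms)
  ultimately show ?thesis by linarith
qed


lemma H2_complete:
  fixes h :: "nat \<Rightarrow> nat \<Rightarrow> complex" and e :: "nat \<Rightarrow> real"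
  assumes h: "\<And>m. h m \<in> H2" and c: "\<And>m l. nsq (\<lambda>k. h m k - h l k) \<le> e m + e l"
    and e: "e \<longlonglongrightarrow> 0"
  shows "\<exists>g\<in>H2. \<forall>m. nsq (\<lambda>k. h m k - g k) \<le> e m"
proof -
  have hd: "(\<lambda>k. h m k - h l k) \<in> H2" for m l using h by (intro H2_diff)
  have ps: "(\<Sum>k\<in>I. (cmod (h m k - h l k))\<^sup>2) \<le> e m + e l" if "finite I" for m l I
  proof -
    have "(\<Sum>k\<in>I. (cmod (h m k - h l k))\<^sup>2) \<le> nsq (\<lambda>k. h m k - h l k)"
      unfolding nsq_def using hd[of m l] that by (intro sum_le_suminf) (auto simp: H2_def)
    then show ?thesis using c[of m l] by linarith
  qed
  have tb: "(cmod (h m k - h l k))\<^sup>2 \<le> e m + e l" for m l k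
    using ps[of "{k}" m l] by simp
  have cau: "Cauchy (\<lambda>m. h m k)" for k
  proof (rule metric_CauchyI)
    fix \<epsilon> :: real assume \<epsilon>: "0 < \<epsilon>"
    have "\<forall>\<^sub>F m in sequentially. e m < \<epsilon>\<^sup>2 / 2"
      using e \<epsilon> by (intro order_tendstoD) auto
    then obtain M where M: "\<And>m. m \<ge> M \<Longrightarrow> e m < \<epsilon>\<^sup>2 / 2" by (auto simp: eventually_sequentially)
    show "\<exists>M. \<forall>m\<ge>M. \<forall>n\<ge>M. dist (h m k) (h n k) < \<epsilon>"
    proof (intro exI allI impI)
      fix m n assume "m \<ge> M" "n \<ge> M"
      then have "(cmod (h m k - h n k))\<^sup>2 < \<epsilon>\<^sup>2" using tb[where m=m and l=n and k=k] M[of m] M[of n] by linarith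
      then show "dist (h m k) (h n k) < \<epsilon>" using \<epsilon> by (simp add: dist_norm power_less_imp_less_base)
    qed
  qed
  define g where "g k = lim (\<lambda>m. h m k)" for k
  have gl: "(\<lambda>m. h m k) \<longlonglongrightarrow> g k" for k
    unfolding g_def using cau[of k] by (simp add: Cauchy_convergent_iff convergent_LIMSEQ_iff)
  have pb: "(\<Sum>k<K. (cmod (h m k - g k))\<^sup>2) \<le> e m" for m K
  proof (rule tendsto_le[OF sequentially_bot])
    show "(\<lambda>l. e m + e l) \<longlonglongrightarrow> e m" using tendsto_add[OF tendsto_const e, of "e m"] by simp
    show "(\<lambda>l. \<Sum>k<K. (cmod (h m k - h l k))\<^sup>2) \<longlonglongrightarrow> (\<Sum>k<K. (cmod (h m k - g k))\<^sup>2)"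
      by (intro tendsto_intros gl)
    show "\<forall>\<^sub>F l in sequentially. (\<Sum>k<K. (cmod (h m k - h l k))\<^sup>2) \<le> e m + e l"
      using ps by auto
  qed
  have sm: "summable (\<lambda>k. (cmod (h m k - g k))\<^sup>2)" for m
    by (rule summableI_nonneg_bounded[where x="e m"]) (use pb in auto)
  have hg: "(\<lambda>k. h m k - g k) \<in> H2" for m using sm by (simp add: H2_def)
  have gH: "g \<in> H2" using H2_diff[OF h[of 0] hg[of 0]] by simp
  show ?thesis
    using gH sm pb by (auto intro!: bexI[of _ g] suminf_le_const simp: nsq_def)
qed


lemma powr_diff_bound:
  fixes s :: complex
  assumes k: "k \<ge> 1" and s: "Re s \<ge> 0"
  shows "cmod (of_nat (Suc k) powr (1 - s) - of_nat k powr (1 - s)) \<le> cmod (1 - s) * real k powr (- Re s)"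
proof -
  define S where "S = closed_segment (of_nat k :: complex) (of_nat (Suc k))"
  have inS: "z \<in> \<real> \<and> Re z \<ge> real k" if "z \<in> S" for z
  proof -
    from that obtain u :: real where u: "0 \<le> u" "u \<le> 1" "z = (1 - u) *\<^sub>R of_nat k + u *\<^sub>R of_nat (Suc k)"
      unfolding S_def in_segment by auto
    then have "z = of_real (real k + u)" by (simp add: scaleR_conv_of_real algebra_simps)
    then show ?thesis using u by simp
  qed
  have notneg: "z \<notin> \<real>\<^sub>\<le>\<^sub>0" if "z \<in> S" for z
    using inS[OF that] k by (auto simp: nonpos_Reals_def Reals_def)
  have "cmod (of_nat (Suc k) powr (1 - s) - of_nat k powr (1 - s)) \<le> (cmod (1 - s) * real k powr (- Re s)) * cmod (of_nat (Suc k) - (of_nat k :: complex))"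
  proof (rule field_differentiable_bound[where S=S and f="\<lambda>z. z powr (1 - s)" and f'="\<lambda>z. (1 - s) * z powr (1 - s - 1)"])
    show "convex S" unfolding S_def by simp
    show "((\<lambda>z. z powr (1 - s)) has_field_derivative (1 - s) * z powr (1 - s - 1)) (at z within S)" if "z \<in> S" for z
      using has_field_derivative_powr[OF notneg[OF that]] by (rule has_field_derivative_at_within)
    show "cmod ((1 - s) * z powr (1 - s - 1)) \<le> cmod (1 - s) * real k powr - Re s" if "z \<in> S" for z
    proof -
      have z: "z \<in> \<real>" "Re z \<ge> real k" using inS[OF that] by auto
      have "cmod (z powr (1 - s - 1)) = Re z powr (- Re s)"
        using z k by (subst norm_powr_real_powr) auto
      also have "\<dots> \<le> real k powr (- Re s)"
        using z k s by (intro powr_mono2') auto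
      finally show ?thesis by (simp add: norm_mult mult_left_mono)
    qed
    show "of_nat (Suc k) \<in> S" "of_nat k \<in> S" unfolding S_def by auto
  qed
  then show ?thesis by simp
qed


definition Gs :: "(nat \<Rightarrow> complex) \<Rightarrow> complex \<Rightarrow> complex" where
  "Gs g s = (\<Sum>k. g k * (of_nat (Suc k) powr (1 - s) - of_nat k powr (1 - s)))"

lemma deriv_powc:
  "((\<lambda>s. (of_nat n :: complex) powr (1 - s)) has_field_derivative - (Ln (of_nat n) * of_nat n powr (1 - s))) (at s)"
proof (cases "n = 0")
  case True then show ?thesis by simp
next
  case False
  have "((\<lambda>s. (of_nat n :: complex) powr (1 - s)) has_field_derivative (Ln (of_nat n) * of_nat n powr (1 - s)) * (-1)) (at s)"
    by (rule DERIV_chain2[where f="\<lambda>z. of_nat n powr z"]) (use False in \<open>auto intro!: has_field_derivative_powr_right derivative_eq_intros\<close>)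
  then show ?thesis by simp
qed

lemma H2_bounded: "g \<in> H2 \<Longrightarrow> cmod (g k) \<le> sqrt (nsq g)"
proof -
  assume g: "g \<in> H2"
  have "(\<Sum>j\<in>{k}. (cmod (g j))\<^sup>2) \<le> nsq g"
    unfolding nsq_def using g by (intro sum_le_suminf) (auto simp: H2_def)
  then show ?thesis by (simp add: real_le_rsqrt)
qed

lemma Gs_holo:
  assumes g: "g \<in> H2" and R: "R > 0"
  shows "Gs g holomorphic_on ({s. 3/4 < Re s} \<inter> ball 0 R)"
proof -
  let ?S = "{s. 3/4 < Re s} \<inter> ball 0 R"
  have op: "open ?S" by (intro open_Int open_halfspace_Re_gt open_ball)
  define h where "h k = cmod (g k) * ((1 + R) * real k powr (-3/4))" for k
  have hs: "summable h"
  proof -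
    have "summable (\<lambda>k. (1+R) * (((cmod (g k))\<^sup>2 + real k powr (-3/2)) / 2))"
      using g by (auto simp: H2_def summable_real_powr_iff intro!: summable_mult summable_divide summable_add)
    then show ?thesis
    proof (rule summable_comparison_test')
      fix k :: nat
      have sq: "(real k powr (-3/4))\<^sup>2 = real k powr (-3/2)"
        by (simp add: power2_eq_square powr_add[symmetric])
      have "0 \<le> (cmod (g k) - real k powr (-3/4))\<^sup>2" by simp
      then have "2 * cmod (g k) * real k powr (-3/4) \<le> (cmod (g k))\<^sup>2 + real k powr (-3/2)"
        unfolding power2_diff sq by linarith
      then have "cmod (g k) * real k powr (-3/4) \<le> ((cmod (g k))\<^sup>2 + real k powr (-3/2)) / 2"
        by simp
      then show "norm (h k) \<le> (1+R) * (((cmod (g k))\<^sup>2 + real k powr (-3/2)) / 2)"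
        using R by (simp add: h_def abs_mult mult_left_mono mult.left_commute)
    qed
  qed
  define F where "F n s = g n * (of_nat (Suc n) powr (1 - s) - of_nat n powr (1 - s))" for n s
  define F' where "F' n x = g n * (- (Ln (of_nat (Suc n)) * of_nat (Suc n) powr (1 - x)) - - (Ln (of_nat n) * of_nat n powr (1 - x)))" for n x
  have fd: "\<And>n x. x \<in> ?S \<Longrightarrow> (F n has_field_derivative F' n x) (at x)"
    unfolding F_def F'_def by (intro DERIV_cmult DERIV_diff deriv_powc)
  have bd: "\<forall>\<^sub>F n in sequentially. \<forall>x\<in>?S. norm (F n x) \<le> h n"
    unfolding eventually_sequentially F_def
  proof (intro exI[of _ 1] allI impI ballI)
    fix n :: nat and x assume n: "n \<ge> 1" and x: "x \<in> ?S"
    have "cmod (of_nat (Suc n) powr (1 - x) - of_nat n powr (1 - x)) \<le> cmod (1 - x) * real n powr (- Re x)"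
      using x n by (intro powr_diff_bound) auto
    also have "\<dots> \<le> (1 + R) * real n powr (-3/4)"
    proof (intro mult_mono)
      have "cmod (1 - x) \<le> 1 + cmod x" using norm_triangle_ineq4[of 1 x] by simp
      then show "cmod (1 - x) \<le> 1 + R" using x by auto
      show "real n powr (- Re x) \<le> real n powr (-3/4)"
        using x n by (intro powr_mono) auto
    qed (use R in auto)
    finally show "norm (g n * (of_nat (Suc n) powr (1 - x) - of_nat n powr (1 - x))) \<le> h n"
      unfolding h_def norm_mult by (intro mult_left_mono) auto
  qed
  note sadc = series_and_derivative_comparison[OF op hs fd bd]
  obtain G0 G0' where G0: "\<forall>x\<in>?S. ((\<lambda>n. F n x) sums G0 x) \<and> ((\<lambda>n. F' n x) sums G0' x) \<and> (G0 has_field_derivative G0' x) (at x)"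
    by (rule sadc)
  have eq: "G0 x = Gs g x" if "x \<in> ?S" for x
  proof -
    have "(\<lambda>n. F n x) sums G0 x" using G0 that by blast
    then have "G0 x = (\<Sum>n. F n x)" by (rule sums_unique)
    then show ?thesis by (simp add: Gs_def F_def)
  qed
  show ?thesis
    unfolding holomorphic_on_open[OF op]
  proof
    fix x assume x: "x \<in> ?S"
    show "\<exists>f'. (Gs g has_field_derivative f') (at x)"
    proof -
      have d: "(G0 has_field_derivative G0' x) (at x)" using G0 x by blast
      show ?thesis using has_field_derivative_transform_within_open[OF d op x eq] by blast
    qed
  qed
qed

lemma Gs_zero_nat:
  assumes g: "g \<in> H2" and a: "a > 0"
    and dense: "\<And>c d. 0 \<le> c \<Longrightarrow> c < d \<Longrightarrow> d \<le> a \<Longrightarrow> \<exists>t. c < t \<and> t < d \<and> Gs g (1 + \<i> * of_real t) = 0"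
    and N: "N \<ge> 1"
  shows "Gs g (of_nat N) = 0"
proof -
  define R where "R = real N + a + 2"
  have R: "R > 0" using a by (simp add: R_def)
  let ?S = "{s. 3/4 < Re s} \<inter> ball 0 R"
  define U where "U = {z. \<exists>t. 0 < t \<and> t < a \<and> z = 1 + \<i> * of_real t \<and> Gs g z = 0}"
  have nrm: "cmod (1 + \<i> * of_real t) \<le> 1 + \<bar>t\<bar>" for t
    using norm_triangle_ineq[of 1 "\<i> * of_real t"] by (simp add: norm_mult)
  show ?thesis
  proof (rule analytic_continuation[of "Gs g" ?S U "1 + \<i> * of_real (a/2)"])
    show "Gs g holomorphic_on ?S" using Gs_holo[OF g R] .
    show "open ?S" by (intro open_Int open_halfspace_Re_gt open_ball)
    show "connected ?S" by (intro convex_connected convex_Int convex_halfspace_Re_gt convex_ball)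
    show "U \<subseteq> ?S"
    proof
      fix z assume "z \<in> U"
      then obtain t where t: "0 < t" "t < a" "z = 1 + \<i> * of_real t" by (auto simp: U_def)
      then show "z \<in> ?S" using nrm[of t] by (auto simp: R_def)
    qed
    show "1 + \<i> * of_real (a/2) \<in> ?S" using nrm[of "a/2"] a by (auto simp: R_def)
    show "Gs g z = 0" if "z \<in> U" for z using that by (auto simp: U_def)
    show "of_nat N \<in> ?S" using N a by (auto simp: R_def)
    show "(1 + \<i> * of_real (a/2)) islimpt U"
      unfolding islimpt_approachable
    proof (intro allI impI)
      fix \<epsilon> :: real assume \<epsilon>: "\<epsilon> > 0"
      obtain t where t: "a/2 < t" "t < a/2 + min \<epsilon> (a/2)" "Gs g (1 + \<i> * of_real t) = 0"
      proof -
        have le: "a/2 + min \<epsilon> (a/2) \<le> a" by (simp add: min_def)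
        have "a/2 < a/2 + min \<epsilon> (a/2)" using a \<epsilon> by simp
        then show ?thesis using dense[of "a/2" "a/2 + min \<epsilon> (a/2)"] a le that by force
      qed
      have "1 + \<i> * of_real t \<in> U" using t a by (auto simp: U_def)
      moreover have "1 + \<i> * of_real t \<noteq> 1 + \<i> * of_real (a/2)"
      proof
        assume "1 + \<i> * of_real t = 1 + \<i> * of_real (a/2)"
        then have "Im (1 + \<i> * of_real t) = Im (1 + \<i> * of_real (a/2))" by (rule arg_cong)
        then show False using t by simp
      qed
      moreover have "dist (1 + \<i> * of_real t) (1 + \<i> * of_real (a/2)) < \<epsilon>"
      proof -
        have "dist (1 + \<i> * of_real t) (1 + \<i> * of_real (a/2)) = cmod (\<i> * of_real (t - a/2))"
          by (simp add: dist_norm algebra_simps)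
        also have "\<dots> = \<bar>t - a/2\<bar>" unfolding norm_mult norm_of_real by simp
        finally show ?thesis using t by simp
      qed
      ultimately show "\<exists>x'\<in>U. x' \<noteq> 1 + \<i> * of_real (a/2) \<and> dist x' (1 + \<i> * of_real (a/2)) < \<epsilon>" by blast
    qed
  qed
qed



lemma powr_neg_nat:
  "(of_nat j :: complex) powr (1 - of_nat (Suc M)) = (if j = 0 then 0 else inverse (of_nat j ^ M))"
proof (cases "j = 0")
  case False
  have "(of_nat j :: complex) powr (1 - of_nat (Suc M)) = exp (- (of_nat M * Ln (of_nat j)))"
    using False by (simp add: powr_def algebra_simps)
  also have "\<dots> = inverse (exp (of_nat M * Ln (of_nat j)))" by (rule exp_minus)
  also have "exp (of_nat M * Ln (of_nat j)) = (of_nat j :: complex) powr of_nat M"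
    using False by (simp add: powr_def)
  also have "\<dots> = of_nat j ^ M" using False by (simp add: powr_nat)
  finally show ?thesis using False by simp
qed simp

lemma summable_inv_sq: "summable (\<lambda>n. inverse (real (Suc n) ^ 2))"
proof -
  have "summable (\<lambda>n. inverse (real n ^ 2))" by (rule inverse_power_summable) simp
  then show ?thesis by (subst summable_Suc_iff[where f="\<lambda>n. inverse (real n ^ 2)"])
qed

lemma inv_pow_le: "M \<ge> 2 \<Longrightarrow> inverse (real (Suc n) ^ M) \<le> inverse (real (Suc n) ^ 2)"
  by (intro le_imp_inverse_le power_increasing) auto

lemma summable_weighted:
  fixes b :: "nat \<Rightarrow> complex"
  assumes C: "\<And>j. cmod (b j) \<le> C" and M: "M \<ge> 2"
  shows "summable (\<lambda>j. b j / of_nat (Suc j) ^ M)"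
proof (rule summable_comparison_test')
  show "summable (\<lambda>n. C * inverse (real (Suc n) ^ 2))" by (intro summable_mult summable_inv_sq)
  fix n :: nat
  have "cmod (b n / of_nat (Suc n) ^ M) = cmod (b n) * inverse (real (Suc n) ^ M)"
    by (simp add: norm_mult norm_inverse norm_power divide_inverse del: of_nat_Suc)
  also have "\<dots> \<le> C * inverse (real (Suc n) ^ 2)"
    using C[of n] inv_pow_le[OF M, of n] order.trans[OF norm_ge_zero C[of n]] by (intro mult_mono) auto
  finally show "norm (b n / of_nat (Suc n) ^ M) \<le> C * inverse (real (Suc n) ^ 2)" .
qed

lemma dirichlet_unique:
  fixes b :: "nat \<Rightarrow> complex"
  assumes C: "\<And>j. cmod (b j) \<le> C" and z: "\<And>M. M \<ge> 2 \<Longrightarrow> (\<Sum>j. b j / of_nat (Suc j) ^ M) = 0"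
  shows "b m = 0"
proof (induction m rule: less_induct)
  case (less m)
  have C0: "C \<ge> 0" using C[of 0] norm_ge_zero[of "b 0"] by linarith
  define q :: real where "q = real (Suc m) / real (Suc (Suc m))"
  define r :: "nat \<Rightarrow> real" where "r n = real (Suc m) / real (n + Suc (Suc m))" for n
  have r0: "0 \<le> r n" for n by (simp add: r_def)
  have rq: "r n \<le> q" for n unfolding r_def q_def by (intro divide_left_mono) auto
  have q0: "0 \<le> q" "q < 1" by (auto simp: q_def)
  have rsq: "(r n)\<^sup>2 \<le> (real (Suc m))\<^sup>2 * inverse (real (Suc n) ^ 2)" for n
  proof -
    have "r n \<le> real (Suc m) / real (Suc n)" unfolding r_def by (intro divide_left_mono) auto
    then have "(r n)\<^sup>2 \<le> (real (Suc m) / real (Suc n))\<^sup>2" using r0 by (intro power_mono) auto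
    also have "(real (Suc m) / real (Suc n))\<^sup>2 = (real (Suc m))\<^sup>2 * inverse (real (Suc n) ^ 2)"
      unfolding power_divide by (rule divide_inverse)
    finally show ?thesis .
  qed
  have sW: "summable (\<lambda>n. (r n)\<^sup>2)"
    by (rule summable_comparison_test'[OF summable_mult[OF summable_inv_sq, of "(real (Suc m))\<^sup>2"]]) (use rsq in auto)
  define W where "W = (\<Sum>n. (r n)\<^sup>2)"
  have bound: "cmod (b m) \<le> C * W * q ^ k" for k
  proof -
    define M where "M = k + 2"
    have M: "M \<ge> 2" by (simp add: M_def)
    define f where "f = (\<lambda>j. b j / of_nat (Suc j) ^ M)"
    have sf: "summable f" unfolding f_def by (rule summable_weighted[OF C M])
    have sfm: "summable (\<lambda>n. f (n + m))" using sf by (subst summable_iff_shift)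
    have "0 = suminf f" using z[OF M] unfolding f_def by simp
    also have "\<dots> = (\<Sum>n. f (n + m)) + sum f {..<m}" by (rule suminf_split_initial_segment[OF sf])
    also have "sum f {..<m} = 0" using less.IH by (simp add: f_def)
    also have "(\<Sum>n. f (n + m)) = f m + (\<Sum>n. f (Suc n + m))"
      using suminf_split_head[OF sfm] by simp
    finally have fm: "f m = - (\<Sum>n. f (Suc n + m))" by (simp add: eq_neg_iff_add_eq_0)
    define P where "P = real (Suc m) ^ M"
    have P: "P > 0" by (simp add: P_def)
    have tb: "cmod (f (Suc n + m)) \<le> C * q ^ k * (r n)\<^sup>2 / P" for n
    proof -
      have e: "f (Suc n + m) = b (Suc n + m) / of_nat (n + Suc (Suc m)) ^ M" by (simp add: f_def)
      have "cmod (f (Suc n + m)) = cmod (b (Suc n + m)) / real (n + Suc (Suc m)) ^ M"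
        unfolding e norm_divide norm_power norm_of_nat ..
      also have "\<dots> \<le> C / real (n + Suc (Suc m)) ^ M"
        using C by (intro divide_right_mono) auto
      also have "\<dots> = C * r n ^ M / P"
        by (simp add: r_def P_def power_divide)
      also have "r n ^ M = r n ^ k * (r n)\<^sup>2" by (simp add: M_def power_add power2_eq_square)
      also have "r n ^ k \<le> q ^ k" using r0 rq by (intro power_mono) auto
      then have "C * (r n ^ k * (r n)\<^sup>2) / P \<le> C * (q ^ k * (r n)\<^sup>2) / P"
        using C0 P by (intro divide_right_mono mult_left_mono mult_right_mono) auto
      finally show ?thesis by (simp add: mult.assoc)
    qed
    have snf: "summable (\<lambda>n. cmod (f (Suc n + m)))"
    proof (rule summable_comparison_test')
      show "summable (\<lambda>n. C * q ^ k * (r n)\<^sup>2 / P)" by (intro summable_divide summable_mult sW)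
      show "norm (cmod (f (Suc n + m))) \<le> C * q ^ k * (r n)\<^sup>2 / P" for n using tb[of n] by simp
    qed
    have "cmod (f m) = cmod (\<Sum>n. f (Suc n + m))" by (simp add: fm)
    also have "\<dots> \<le> (\<Sum>n. cmod (f (Suc n + m)))" by (rule summable_norm[OF snf])
    also have "\<dots> \<le> (\<Sum>n. C * q ^ k * (r n)\<^sup>2 / P)"
      by (rule suminf_le[OF tb snf]) (intro summable_divide summable_mult sW)
    also have "\<dots> = C * q ^ k * W / P"
      unfolding W_def using sW by (simp add: suminf_divide suminf_mult)
    finally have "cmod (f m) \<le> C * q ^ k * W / P" .
    moreover have "cmod (b m) = P * cmod (f m)"
    proof -
      have "cmod (f m) = cmod (b m) / P" by (simp only: f_def P_def norm_divide norm_power norm_of_nat)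
      then show ?thesis using P by simp
    qed
    ultimately have "cmod (b m) \<le> P * (C * q ^ k * W / P)"
      using P by (metis less_le mult_left_mono)
    also have "P * (C * q ^ k * W / P) = C * W * q ^ k" using P by (simp add: field_simps)
    finally show ?thesis .
  qed
  have lim: "(\<lambda>k. C * W * q ^ k) \<longlonglongrightarrow> 0"
    using LIMSEQ_power_zero[of q] q0 by (intro tendsto_mult_right_zero) auto
  have "cmod (b m) \<le> 0"
    by (rule LIMSEQ_le_const[OF lim]) (use bound in auto)
  then show ?case by simp
qed

lemma Gs_nat:
  assumes g: "g \<in> H2" and M: "M \<ge> 2"
  shows "Gs g (of_nat (Suc M)) = (\<Sum>j. (g j - g (Suc j)) / of_nat (Suc j) ^ M)"
proof -
  define C where "C = sqrt (nsq g)"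
  have C: "cmod (g j) \<le> C" for j unfolding C_def by (rule H2_bounded[OF g])
  define A where "A k = g k / of_nat (Suc k) ^ M" for k
  define B where "B k = (if k = 0 then 0 else g k / of_nat k ^ M)" for k
  have tm: "g k * (of_nat (Suc k) powr (1 - of_nat (Suc M)) - of_nat k powr (1 - of_nat (Suc M))) = A k - B k" for k
    unfolding A_def B_def powr_neg_nat by (simp del: of_nat_Suc add: divide_inverse algebra_simps)
  have sA: "summable A" unfolding A_def by (rule summable_weighted[OF C M])
  have sBs: "summable (\<lambda>k. B (Suc k))" unfolding B_def using summable_weighted[OF C[of "Suc _"] M, of "\<lambda>j. j"]
    by simp
  have sB: "summable B" using sBs by (subst summable_Suc_iff[symmetric])
  have "Gs g (of_nat (Suc M)) = (\<Sum>k. A k - B k)"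
    unfolding Gs_def tm ..
  also have "\<dots> = suminf A - suminf B" by (rule suminf_diff[OF sA sB, symmetric])
  also have "suminf B = (\<Sum>k. B (Suc k))" using suminf_split_head[OF sB] by (simp add: B_def)
  also have "suminf A - (\<Sum>k. B (Suc k)) = (\<Sum>k. A k - B (Suc k))" by (rule suminf_diff[OF sA sBs])
  also have "\<dots> = (\<Sum>j. (g j - g (Suc j)) / of_nat (Suc j) ^ M)"
    by (simp add: A_def B_def diff_divide_distrib del: of_nat_Suc)
  finally show ?thesis .
qed

lemma g_zero:
  assumes g: "g \<in> H2" and z: "\<And>M. M \<ge> 2 \<Longrightarrow> Gs g (of_nat (Suc M)) = 0"
  shows "g k = 0"
proof -
  define C where "C = sqrt (nsq g)"
  have C: "cmod (g j) \<le> C" for j unfolding C_def by (rule H2_bounded[OF g])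
  have Cb: "cmod (g j - g (Suc j)) \<le> 2 * C" for j
    using norm_triangle_ineq4[of "g j" "g (Suc j)"] C[of j] C[of "Suc j"] by linarith
  have b0: "g j - g (Suc j) = 0" for j
  proof (rule dirichlet_unique[where b="\<lambda>j. g j - g (Suc j)" and m=j, OF Cb])
    fix M :: nat assume M: "M \<ge> 2"
    show "(\<Sum>j. (g j - g (Suc j)) / of_nat (Suc j) ^ M) = 0"
      using trans[OF Gs_nat[OF g M, symmetric] z[OF M]] .
  qed
  have const: "g j = g 0" for j
  proof (induction j)
    case (Suc j) then show ?case using b0[of j] by (simp add: right_minus_eq)
  qed simp
  have s: "summable (\<lambda>k. (cmod (g k))\<^sup>2)" using g by (simp add: H2_def)
  have eq: "(\<lambda>k. (cmod (g k))\<^sup>2) = (\<lambda>j. (cmod (g 0))\<^sup>2)"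
    by (rule ext) (subst const, rule refl)
  have "summable (\<lambda>j. (cmod (g 0))\<^sup>2)" using s unfolding eq .
  then have "(\<lambda>j. (cmod (g 0))\<^sup>2) \<longlonglongrightarrow> 0" by (rule summable_LIMSEQ_zero)
  then have "(cmod (g 0))\<^sup>2 = 0" by (simp add: LIMSEQ_const_iff)
  then show ?thesis using const[of k] by simp
qed


lemma B_dense:
  assumes n: "n \<ge> 2" and meas: "circle_measurable A" and m1: "circle_m A = 1"
    and cd: "0 \<le> c" "c < d" "d \<le> 2*pi / ln (real n)"
  shows "\<exists>t. c < t \<and> t < d \<and> phi_n n t \<in> A"
proof (rule ccontr)
  assume no: "\<not> ?thesis"
  define L where "L = ln (real n)"
  have L: "L > 0" using n by (simp add: L_def)
  define E where "E = {\<theta> \<in> {0..<2*pi}. cis \<theta> \<in> A}"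
  have Em: "E \<in> sets lebesgue" using meas by (simp add: circle_measurable_def E_def)
  have mE: "measure lebesgue E = 2*pi" using m1 by (simp add: circle_m_def E_def)
  have dL: "d * L \<le> 2*pi" using cd(3) L by (simp add: L_def field_simps)
  have cL: "c * L < d * L" using cd L by simp
  have cL0: "0 \<le> c*L" using cd L by simp
  have ss: "{c*L<..<d*L} \<subseteq> {0..2*pi}" using cL0 dL by auto
  have sub: "E \<subseteq> {0..2*pi} - {c*L<..<d*L}"
  proof
    fix x assume x: "x \<in> E"
    show "x \<in> {0..2*pi} - {c*L<..<d*L}"
    proof (rule ccontr)
      assume "x \<notin> {0..2*pi} - {c*L<..<d*L}"
      with x have x1: "c*L < x" "x < d*L" by (auto simp: E_def)
      have "c < x / L" "x / L < d" using x1 L by (auto simp: field_simps)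
      moreover have "phi_n n (x/L) \<in> A" using x L by (simp add: E_def phi_n_def L_def)
      ultimately show False using no by blast
    qed
  qed
  have "measure lebesgue E \<le> measure lebesgue ({0..2*pi} - {c*L<..<d*L})"
    by (rule measure_mono_fmeasurable[OF sub Em]) (auto intro: fmeasurable_Diff)
  also have "\<dots> = 2*pi - (d*L - c*L)"
    apply (subst measurable_measure_Diff)
    using cd L dL cL cL0 ss by auto
  finally show False using mE cL by simp
qed

definition K :: "real \<Rightarrow> nat \<Rightarrow> complex" where
  "K t = zeta_kernel (1 + \<i> * complex_of_real t)"

lemma K_H2: "K t \<in> H2"
proof -
  define s' where "s' = 1 - \<i> * complex_of_real t"
  have cs: "cnj (1 + \<i> * complex_of_real t) = s'" by (simp add: s'_def)
  have Re: "Re s' = 1" by (simp add: s'_def)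
  have s'0: "s' \<noteq> 0" using Re by auto
  define D where "D = (cmod (1 - s') / cmod s')\<^sup>2"
  have bnd: "norm ((cmod (K t k))\<^sup>2) \<le> D * inverse (real k ^ 2)" if k: "k \<ge> 1" for k
  proof -
    have Kk: "K t k = - (1 / s') * (of_nat (Suc k) powr (1 - s') - of_nat k powr (1 - s'))"
      using k by (simp add: K_def zeta_kernel_def zeta_phi_def s'_def)
    have "cmod (K t k) = cmod (of_nat (Suc k) powr (1 - s') - of_nat k powr (1 - s')) / cmod s'"
      unfolding Kk by (simp add: norm_mult norm_divide)
    also have "\<dots> \<le> cmod (1 - s') * real k powr (- Re s') / cmod s'"
      using k Re by (intro divide_right_mono powr_diff_bound) auto
    also have "\<dots> = (cmod (1 - s') / cmod s') * real k powr (-1)" using Re by simp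
    finally have c1: "cmod (K t k) \<le> (cmod (1 - s') / cmod s') * real k powr (-1)" .
    have "(cmod (K t k))\<^sup>2 \<le> ((cmod (1 - s') / cmod s') * real k powr (-1))\<^sup>2"
      by (rule power_mono[OF c1]) simp
    also have "\<dots> = D * inverse (real k ^ 2)"
      using k by (simp add: D_def powr_minus field_simps power2_eq_square)
    finally show ?thesis by simp
  qed
  have "summable (\<lambda>k. (cmod (K t k))\<^sup>2)"
    by (rule summable_comparison_test'[OF summable_mult[OF inverse_power_summable] bnd]) auto
  then show ?thesis by (simp add: H2_def)
qed

lemma inn_K_Gs:
  assumes g: "g \<in> H2" and z: "inn g (K t) = 0"
  shows "Gs g (1 + \<i> * complex_of_real t) = 0"
proof -
  define s where "s = 1 + \<i> * complex_of_real t"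
  have s0: "s \<noteq> 0" by (auto simp: s_def complex_eq_iff)
  have cs: "cnj s = 1 - \<i> * complex_of_real t" by (simp add: s_def)
  have cnjp: "cnj ((of_nat j :: complex) powr (1 - cnj s)) = of_nat j powr (1 - s)" for j
    by (subst cnj_powr) auto
  have tm: "g k * (of_nat (Suc k) powr (1 - s) - of_nat k powr (1 - s)) = (- s) * (g k * cnj (K t k))" for k
  proof (cases "k = 0")
    case True
    then show ?thesis using s0 by (simp add: K_def zeta_kernel_def zeta_phi_def s_def[symmetric] cs)
  next
    case False
    have "cnj (K t k) = - (1 / s) * (of_nat (Suc k) powr (1 - s) - of_nat k powr (1 - s))"
      using False by (simp add: K_def zeta_kernel_def zeta_phi_def s_def[symmetric] cnjp[of "Suc k", simplified] cnjp[of k])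
    then have "(- s) * cnj (K t k) = of_nat (Suc k) powr (1 - s) - of_nat k powr (1 - s)"
      using s0 by simp
    then show ?thesis by (metis mult.left_commute)
  qed
  have "Gs g s = (\<Sum>k. (- s) * (g k * cnj (K t k)))" unfolding Gs_def tm ..
  also have "\<dots> = (- s) * inn g (K t)"
    unfolding inn_def by (rule suminf_mult[OF summable_inn[OF g K_H2]])
  finally show ?thesis using z by (simp add: s_def)
qed

definition spanK :: "real set \<Rightarrow> (nat \<Rightarrow> complex) \<Rightarrow> bool" where
  "spanK B v \<longleftrightarrow> (\<exists>(N::nat) ts c. (\<forall>i<N. ts i \<in> B) \<and> v = (\<lambda>k. \<Sum>i<N. c i * K (ts i) k))"

lemma spanK_H2: "spanK S u \<Longrightarrow> u \<in> H2"
  unfolding spanK_def by (auto intro!: H2_sum H2_scale K_H2)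

lemma spanK_zero: "spanK B (\<lambda>k. 0)"
  unfolding spanK_def by (rule exI[of _ 0]) simp

lemma spanK_K: "t \<in> B \<Longrightarrow> spanK B (K t)"
  unfolding spanK_def by (rule exI[of _ 1], rule exI[of _ "\<lambda>_. t"], rule exI[of _ "\<lambda>_. 1"]) auto

lemma spanK_scale: "spanK B v \<Longrightarrow> spanK B (\<lambda>k. a * v k)"
  unfolding spanK_def
proof (elim exE conjE)
  fix N :: nat and ts c assume ts: "\<forall>i<N. ts i \<in> B" and v: "v = (\<lambda>k. \<Sum>i<N. c i * K (ts i) k)"
  show "\<exists>(N::nat) ts c. (\<forall>i<N. ts i \<in> B) \<and> (\<lambda>k. a * v k) = (\<lambda>k. \<Sum>i<N. c i * K (ts i) k)"
    by (rule exI[of _ N], rule exI[of _ ts], rule exI[of _ "\<lambda>i. a * c i"])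
       (simp add: ts v sum_distrib_left mult.assoc)
qed

lemma spanK_add: "spanK B v \<Longrightarrow> spanK B w \<Longrightarrow> spanK B (\<lambda>k. v k + w k)"
  unfolding spanK_def
proof (elim exE conjE)
  fix N1 N2 :: nat and ts1 c1 ts2 c2
  assume ts1: "\<forall>i<N1. ts1 i \<in> B" and v: "v = (\<lambda>k. \<Sum>i<N1. c1 i * K (ts1 i) k)"
     and ts2: "\<forall>i<N2. ts2 i \<in> B" and w: "w = (\<lambda>k. \<Sum>i<N2. c2 i * K (ts2 i) k)"
  define ts where "ts i = (if i < N1 then ts1 i else ts2 (i - N1))" for i
  define c where "c i = (if i < N1 then c1 i else c2 (i - N1))" for i
  have tsB: "\<forall>i<N1 + N2. ts i \<in> B" using ts1 ts2 by (auto simp: ts_def)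
  have sm: "(\<Sum>i<N1 + N2. c i * K (ts i) k) = (\<Sum>i<N1. c1 i * K (ts1 i) k) + (\<Sum>i<N2. c2 i * K (ts2 i) k)" for k
  proof -
    have un: "{..<N1 + N2} = {..<N1} \<union> {N1..<N1 + N2}" by auto
    have "(\<Sum>i<N1 + N2. c i * K (ts i) k) = (\<Sum>i<N1. c i * K (ts i) k) + (\<Sum>i\<in>{N1..<N1 + N2}. c i * K (ts i) k)"
      unfolding un by (rule sum.union_disjoint) auto
    also have "(\<Sum>i<N1. c i * K (ts i) k) = (\<Sum>i<N1. c1 i * K (ts1 i) k)"
      by (rule sum.cong) (auto simp: c_def ts_def)
    also have "(\<Sum>i\<in>{N1..<N1 + N2}. c i * K (ts i) k) = (\<Sum>i\<in>{0 + N1..<N2 + N1}. c i * K (ts i) k)"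
      by (simp add: add.commute)
    also have "\<dots> = (\<Sum>i\<in>{0..<N2}. c (i + N1) * K (ts (i + N1)) k)"
      by (rule sum.shift_bounds_nat_ivl)
    also have "\<dots> = (\<Sum>i<N2. c2 i * K (ts2 i) k)"
      by (simp add: c_def ts_def atLeast0LessThan)
    finally show ?thesis .
  qed
  show "\<exists>(N::nat) ts c. (\<forall>i<N. ts i \<in> B) \<and> (\<lambda>k. v k + w k) = (\<lambda>k. \<Sum>i<N. c i * K (ts i) k)"
    by (rule exI[of _ "N1 + N2"], rule exI[of _ ts], rule exI[of _ c]) (use tsB sm v w in auto)
qed

lemma orth:
  assumes g: "g \<in> H2" and w: "w \<in> H2" and m: "\<And>l. nsq g \<le> nsq (\<lambda>k. g k - l * w k)"
  shows "inn g w = 0"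
proof -
  define z where "z = inn g w"
  define W where "W = nsq w"
  have W0: "W \<ge> 0" unfolding W_def by (rule nsq_nonneg[OF w])
  define r where "r = 1 / (W + 1)"
  have r0: "r > 0" using W0 by (simp add: r_def)
  have rW: "r * W < 1" using W0 by (simp add: r_def field_simps)
  have "nsq g \<le> nsq g - 2 * Re (cnj (of_real r * z) * z) + (cmod (of_real r * z))\<^sup>2 * W"
    using m[of "of_real r * z"] nsq_expand[OF g w, of "of_real r * z"] by (simp add: z_def W_def)
  moreover have "Re (cnj (of_real r * z) * z) = r * (cmod z)\<^sup>2"
    unfolding cmod_power2 by (simp add: algebra_simps power2_eq_square)
  moreover have "(cmod (of_real r * z))\<^sup>2 = r\<^sup>2 * (cmod z)\<^sup>2"
    using r0 by (simp add: norm_mult power_mult_distrib)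
  ultimately have "2 * r * (cmod z)\<^sup>2 \<le> r\<^sup>2 * (cmod z)\<^sup>2 * W" by simp
  then have "r * (2 * (cmod z)\<^sup>2) \<le> r * ((r * W) * (cmod z)\<^sup>2)" by (simp add: power2_eq_square mult_ac)
  then have "2 * (cmod z)\<^sup>2 \<le> (r * W) * (cmod z)\<^sup>2" using r0 by simp
  moreover have "(r * W) * (cmod z)\<^sup>2 \<le> 1 * (cmod z)\<^sup>2" using rW by (intro mult_right_mono) auto
  ultimately have "(cmod z)\<^sup>2 \<le> 0" by linarith
  then show ?thesis by (simp add: z_def)
qed

lemma sqrt_lim:
  assumes "\<And>m. x \<le> y + sqrt (2 / real (Suc m))"
  shows "x \<le> y"
proof -
  have "(\<lambda>m. 2 / real (Suc m)) \<longlonglongrightarrow> 0"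
    using LIMSEQ_Suc[OF lim_const_over_n[of 2]] by simp
  then have "(\<lambda>m. sqrt (2 / real (Suc m))) \<longlonglongrightarrow> sqrt 0" by (rule tendsto_real_sqrt)
  then have "(\<lambda>m. sqrt (2 / real (Suc m))) \<longlonglongrightarrow> 0" by simp
  then have "(\<lambda>m. y + sqrt (2 / real (Suc m))) \<longlonglongrightarrow> y + 0" by (rule tendsto_add[OF tendsto_const])
  then have "(\<lambda>m. y + sqrt (2 / real (Suc m))) \<longlonglongrightarrow> y" by simp
  then show ?thesis by (rule LIMSEQ_le_const) (use assms in auto)
qed

theorem mainTheorem15:
  fixes n :: nat and A :: "complex set"
  assumes "n \<ge> 2"
    and "A \<subseteq> sphere 0 1"
    and "circle_measurable A"
    and "circle_m A = 1"
  shows "kernels_span_dense {t \<in> {0<..<2*pi / ln (real n)}. phi_n n t \<in> A}"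
proof -
  define a where "a = 2*pi / ln (real n)"
  have a: "a > 0" using assms(1) by (simp add: a_def)
  define B where "B = {t \<in> {0<..<a}. phi_n n t \<in> A}"
  have main: "kernels_span_dense B"
  proof (rule ccontr)
    assume "\<not> kernels_span_dense B"
    then obtain f e where f: "f \<in> H2" and e: "e > 0" and far: "\<forall>(N::nat) ts c. (\<forall>i<N. ts i \<in> B) \<longrightarrow>
        \<not> H2_norm (\<lambda>k. f k - (\<Sum>i<N. c i * zeta_kernel (1 + \<i> * complex_of_real (ts i)) k)) < e"
      unfolding kernels_span_dense_def by blast
    have farV: "nsq (\<lambda>k. f k - v k) \<ge> e\<^sup>2" if v0: "spanK B v" for v
    proof -
      from v0 obtain N :: nat and ts c where ts: "\<forall>i<N. ts i \<in> B" and v: "v = (\<lambda>k. \<Sum>i<N. c i * K (ts i) k)"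
        using v0 unfolding spanK_def by blast
      have "\<not> H2_norm (\<lambda>k. f k - (\<Sum>i<N. c i * zeta_kernel (1 + \<i> * complex_of_real (ts i)) k)) < e"
        using far ts by blast
      then have "e \<le> sqrt (nsq (\<lambda>k. f k - v k))" by (simp add: v H2_norm_def nsq_def K_def)
      then have "e\<^sup>2 \<le> (sqrt (nsq (\<lambda>k. f k - v k)))\<^sup>2" using e by (intro power_mono) auto
      also have "\<dots> = nsq (\<lambda>k. f k - v k)"
        using nsq_nonneg[OF H2_diff[OF f spanK_H2[OF v0]]] by simp
      finally show ?thesis .
    qed
    define D where "D = {nsq (\<lambda>k. f k - v k) | v. spanK B v}"
    have Dne: "D \<noteq> {}" using spanK_zero by (auto simp: D_def)
    have Dbd: "bdd_below D" unfolding bdd_below_def D_def using farV by blast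
    define \<delta> where "\<delta> = Inf D"
    have \<delta>e: "e\<^sup>2 \<le> \<delta>" unfolding \<delta>_def by (rule cInf_greatest[OF Dne]) (use farV in \<open>auto simp: D_def\<close>)
    have \<delta>le: "\<delta> \<le> nsq (\<lambda>k. f k - v k)" if "spanK B v" for v
      unfolding \<delta>_def by (rule cInf_lower[OF _ Dbd]) (use that in \<open>auto simp: D_def\<close>)
    have ex: "\<exists>v. spanK B v \<and> nsq (\<lambda>k. f k - v k) < \<delta> + 1 / real (Suc m)" for m
    proof -
      have "Inf D < \<delta> + 1 / real (Suc m)" by (simp add: \<delta>_def)
      then obtain x where "x \<in> D" "x < \<delta> + 1 / real (Suc m)" using cInf_lessD[OF Dne] by blast
      then show ?thesis by (auto simp: D_def)
    qed
    then obtain vs where vs: "\<And>m. spanK B (vs m)" "\<And>m. nsq (\<lambda>k. f k - vs m k) < \<delta> + 1 / real (Suc m)"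
      by metis
    define h where "h m = (\<lambda>k. f k - vs m k)" for m
    have hH: "h m \<in> H2" for m unfolding h_def by (intro H2_diff f spanK_H2[OF vs(1)])
    have hn: "nsq (h m) < \<delta> + 1 / real (Suc m)" for m using vs(2)[of m] by (simp add: h_def)
    have hc: "nsq (\<lambda>k. h m k - h l k) \<le> 2 / real (Suc m) + 2 / real (Suc l)" for m l
    proof -
      define mid where "mid = (\<lambda>k. (1/2) * (vs m k + vs l k))"
      have mid: "spanK B mid" unfolding mid_def by (intro spanK_scale spanK_add vs)
      have eq: "(\<lambda>k. h m k + h l k) = (\<lambda>k. 2 * (f k - mid k))" by (auto simp: h_def mid_def algebra_simps)
      have "nsq (\<lambda>k. h m k + h l k) = (cmod 2)\<^sup>2 * nsq (\<lambda>k. f k - mid k)"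
        unfolding eq by (rule nsq_scale[OF H2_diff[OF f spanK_H2[OF mid]]])
      then have p1: "nsq (\<lambda>k. h m k + h l k) \<ge> 4 * \<delta>" using \<delta>le[OF mid] by simp
      have p2: "nsq (\<lambda>k. h m k - h l k) + nsq (\<lambda>k. h m k + h l k) = 2 * nsq (h m) + 2 * nsq (h l)"
        by (rule parallelogram[OF hH hH])
      have "2 / real (Suc m) = 2 * (1 / real (Suc m))" "2 / real (Suc l) = 2 * (1 / real (Suc l))" by simp_all
      then show ?thesis using p1 p2 hn[of m] hn[of l] by linarith
    qed
    have elim: "(\<lambda>m. 2 / real (Suc m)) \<longlonglongrightarrow> 0" using LIMSEQ_Suc[OF lim_const_over_n[of 2]] by simp
    obtain g where g: "g \<in> H2" and hg: "\<And>m. nsq (\<lambda>k. h m k - g k) \<le> 2 / real (Suc m)"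
      using H2_complete[of h "\<lambda>m. 2 / real (Suc m)", OF hH hc elim] by blast
    have A: "\<delta> \<le> nsq (\<lambda>k. g k - l * w k)" if w: "spanK B w" for w l
    proof -
      have wH: "w \<in> H2" using spanK_H2[OF w] .
      have gl: "(\<lambda>k. g k - l * w k) \<in> H2" using H2_diff[OF g H2_scale[OF wH]] .
      have "sqrt \<delta> \<le> sqrt (nsq (\<lambda>k. g k - l * w k)) + sqrt (2 / real (Suc m))" for m
      proof -
        have vw: "spanK B (\<lambda>k. vs m k + l * w k)" by (intro spanK_add spanK_scale vs w)
        have "\<delta> \<le> nsq (\<lambda>k. f k - (vs m k + l * w k))" by (rule \<delta>le[OF vw])
        also have "(\<lambda>k. f k - (vs m k + l * w k)) = (\<lambda>k. (g k - l * w k) + (h m k - g k))"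
          by (auto simp: h_def)
        finally have "sqrt \<delta> \<le> sqrt (nsq (\<lambda>k. (g k - l * w k) + (h m k - g k)))" by (rule real_sqrt_le_mono)
        also have "\<dots> \<le> sqrt (nsq (\<lambda>k. g k - l * w k)) + sqrt (nsq (\<lambda>k. h m k - g k))"
          using nsq_triangle[OF gl H2_diff[OF hH g]] by simp
        also have "sqrt (nsq (\<lambda>k. h m k - g k)) \<le> sqrt (2 / real (Suc m))"
          using hg[of m] by (rule real_sqrt_le_mono)
        finally show ?thesis by simp
      qed
      then have "sqrt \<delta> \<le> sqrt (nsq (\<lambda>k. g k - l * w k))" by (rule sqrt_lim)
      then show ?thesis by simp
    qed
    have Bd: "nsq g \<le> \<delta>"
    proof -
      have bnd: "sqrt (nsq g) \<le> sqrt (\<delta> + 1 / real (Suc m)) + sqrt (2 / real (Suc m))" for m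
      proof -
        have ge: "g = (\<lambda>k. h m k + (g k - h m k))" by auto
        have "sqrt (nsq g) = sqrt (nsq (\<lambda>k. h m k + (g k - h m k)))" by (subst ge) (rule refl)
        also have "\<dots> \<le> sqrt (nsq (h m)) + sqrt (nsq (\<lambda>k. g k - h m k))"
          by (rule nsq_triangle[OF hH[of m] H2_diff[OF g hH[of m]]])
        also have "sqrt (nsq (h m)) \<le> sqrt (\<delta> + 1 / real (Suc m))"
          using hn[of m] by (intro real_sqrt_le_mono) simp
        also have "nsq (\<lambda>k. g k - h m k) = nsq (\<lambda>k. h m k - g k)"
          by (simp add: nsq_def norm_minus_commute)
        also have "sqrt (nsq (\<lambda>k. h m k - g k)) \<le> sqrt (2 / real (Suc m))"
          using hg[of m] by (rule real_sqrt_le_mono)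
        finally show ?thesis by simp
      qed
      have l1: "(\<lambda>m. 1 / real (Suc m)) \<longlonglongrightarrow> 0" using LIMSEQ_Suc[OF lim_const_over_n[of 1]] by simp
      have "(\<lambda>m. sqrt (\<delta> + 1 / real (Suc m)) + sqrt (2 / real (Suc m))) \<longlonglongrightarrow> sqrt (\<delta> + 0) + sqrt 0"
        by (intro tendsto_add tendsto_real_sqrt tendsto_const l1 elim)
      then have "sqrt (nsq g) \<le> sqrt (\<delta> + 0) + sqrt 0"
        by (rule LIMSEQ_le_const) (use bnd in auto)
      then show ?thesis by simp
    qed
    have orthK: "inn g (K t) = 0" if t: "t \<in> B" for t
    proof (rule orth[OF g K_H2])
      fix l
      show "nsq g \<le> nsq (\<lambda>k. g k - l * K t k)" using Bd A[OF spanK_K[OF t], of l] by linarith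
    qed
    have Gz: "Gs g (1 + \<i> * complex_of_real t) = 0" if "t \<in> B" for t
      using inn_K_Gs[OF g orthK[OF that]] .
    have dense: "\<exists>t. c < t \<and> t < d \<and> Gs g (1 + \<i> * complex_of_real t) = 0"
      if cd: "0 \<le> c" "c < d" "d \<le> a" for c d
    proof -
      obtain t where t: "c < t" "t < d" "phi_n n t \<in> A"
        using B_dense[OF assms(1) assms(3) assms(4) cd(1) cd(2)] cd(3) by (auto simp: a_def)
      have "t \<in> B" using t cd by (auto simp: B_def)
      then show ?thesis using t Gz by blast
    qed
    have "Gs g (of_nat (Suc M)) = 0" for M by (rule Gs_zero_nat[OF g a dense]) auto
    then have g0: "g k = 0" for k by (intro g_zero[OF g])
    then have "nsq g = 0" by (simp add: nsq_def)
    moreover have "\<delta> \<le> nsq g" using A[OF spanK_zero, of 0] by simp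
    moreover have "e\<^sup>2 > 0" using e by simp
    ultimately show False using \<delta>e by linarith
  qed
  then show ?thesis unfolding B_def a_def .
qed


end
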